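(* Let $V$ be a non-empty set with a reflexive and symmetric relation $R$ satisfying the two axioms stated in the context, and let $\mathcal{G}$ be its exchange graph. If for every face $\mathcal{F}$ of $\mathcal{G}$ there exists a projection $P:\mathcal{G}\to\mathcal{F}$, then $\mathcal{G}$ has the non-leaving-face property.
   Context: Elements $x,y\in V$ are called compatible if $(x,y)\in R$. The axioms are: (i) all maximal subsets of pairwise compatible elements of $V$ are finite and have the same cardinality $n$; these maximal subsets are called clusters; (ii) every subset of $n-1$ pairwise compatible elements is contained in exactly two clusters. The exchange graph $\mathcal{G}$ has the clusters as vertices, two clusters being joined by an edge iff their intersection has cardinality $n-1$ ($\mathcal{G}$ need not be connected). For a set $U$ of pairwise compatible elements, the face $\mathcal{F}_U$ is the full subgraph of $\mathcal{G}$ whose vertices are exactly the clusters containing $U$. A geodesic between two vertices is a path between them of minimal length. $\mathcal{G}$ has the non-leaving-face property if every geodesic connecting two vertices of $\mathcal{G}$ lies in the minimal face containing both vertices. A projection onto a face $\mathcal{F}$ is a map $P$ from the vertices of $\mathcal{G}$ to the vertices of $\mathcal{F}$ such that: (P2) $P(v)=v$ for every vertex $v$ of $\mathcal{F}$; (P3) if $v,w$ are joined by an edge of $\mathcal{G}$, then either $P(v)=P(w)$ or $P(v),P(w)$ are joined by an edge of $\mathcal{F}$; (P4) if $v,w$ are joined by an edge of $\mathcal{G}$ with $v\in\mathcal{F}$ and $w\notin\mathcal{F}$, then $P(v)=P(w)$. *)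

theory Defs
  imports Main
begin

definition pw_compat :: "'a set \<Rightarrow> ('a \<times> 'a) set \<Rightarrow> 'a set \<Rightarrow> bool" where
  "pw_compat V R U \<longleftrightarrow> U \<subseteq> V \<and> (\<forall>x\<in>U. \<forall>y\<in>U. (x, y) \<in> R)"

definition is_cluster :: "'a set \<Rightarrow> ('a \<times> 'a) set \<Rightarrow> 'a set \<Rightarrow> bool" where
  "is_cluster V R C \<longleftrightarrow> pw_compat V R C \<and> (\<forall>U. pw_compat V R U \<and> C \<subseteq> U \<longrightarrow> U = C)"

definition clusters :: "'a set \<Rightarrow> ('a \<times> 'a) set \<Rightarrow> 'a set set" where
  "clusters V R = {C. is_cluster V R C}"

definition cluster_axioms :: "'a set \<Rightarrow> ('a \<times> 'a) set \<Rightarrow> nat \<Rightarrow> bool" where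
  "cluster_axioms V R n \<longleftrightarrow>
     (\<forall>C \<in> clusters V R. finite C \<and> card C = n) \<and>
     (\<forall>U. pw_compat V R U \<and> finite U \<and> card U = n - 1 \<longrightarrow>
          card {C \<in> clusters V R. U \<subseteq> C} = 2)"

definition eg_edge :: "'a set \<Rightarrow> ('a \<times> 'a) set \<Rightarrow> nat \<Rightarrow> 'a set \<Rightarrow> 'a set \<Rightarrow> bool" where
  "eg_edge V R n C D \<longleftrightarrow> C \<in> clusters V R \<and> D \<in> clusters V R \<and> card (C \<inter> D) = n - 1"

text \<open>Vertex set of the face F_U (the face is the full subgraph on these vertices).\<close>
definition face :: "'a set \<Rightarrow> ('a \<times> 'a) set \<Rightarrow> 'a set \<Rightarrow> 'a set set" where
  "face V R U = {C \<in> clusters V R. U \<subseteq> C}"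

definition is_face :: "'a set \<Rightarrow> ('a \<times> 'a) set \<Rightarrow> 'a set set \<Rightarrow> bool" where
  "is_face V R F \<longleftrightarrow> (\<exists>U. pw_compat V R U \<and> F = face V R U)"

text \<open>Paths in the exchange graph as lists of vertices; length = number of edges.\<close>
definition eg_path :: "'a set \<Rightarrow> ('a \<times> 'a) set \<Rightarrow> nat \<Rightarrow> 'a set list \<Rightarrow> 'a set \<Rightarrow> 'a set \<Rightarrow> bool" where
  "eg_path V R n p v w \<longleftrightarrow> p \<noteq> [] \<and> hd p = v \<and> last p = w \<and>
     set p \<subseteq> clusters V R \<and>
     (\<forall>i. Suc i < length p \<longrightarrow> eg_edge V R n (p ! i) (p ! Suc i))"

definition geodesic :: "'a set \<Rightarrow> ('a \<times> 'a) set \<Rightarrow> nat \<Rightarrow> 'a set list \<Rightarrow> 'a set \<Rightarrow> 'a set \<Rightarrow> bool" where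
  "geodesic V R n p v w \<longleftrightarrow> eg_path V R n p v w \<and>
     (\<forall>q. eg_path V R n q v w \<longrightarrow> length p \<le> length q)"

definition minimal_face_containing :: "'a set \<Rightarrow> ('a \<times> 'a) set \<Rightarrow> 'a set set \<Rightarrow> 'a set \<Rightarrow> 'a set \<Rightarrow> bool" where
  "minimal_face_containing V R F v w \<longleftrightarrow> is_face V R F \<and> v \<in> F \<and> w \<in> F \<and>
     (\<forall>F'. is_face V R F' \<and> v \<in> F' \<and> w \<in> F' \<longrightarrow> F \<subseteq> F')"

definition non_leaving_face :: "'a set \<Rightarrow> ('a \<times> 'a) set \<Rightarrow> nat \<Rightarrow> bool" where
  "non_leaving_face V R n \<longleftrightarrow>
     (\<forall>v \<in> clusters V R. \<forall>w \<in> clusters V R. \<forall>p F.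
        geodesic V R n p v w \<and> minimal_face_containing V R F v w \<longrightarrow> set p \<subseteq> F)"

text \<open>Projection onto a face F (given by its vertex set), conditions (P2)-(P4).\<close>
definition is_projection :: "'a set \<Rightarrow> ('a \<times> 'a) set \<Rightarrow> nat \<Rightarrow> 'a set set \<Rightarrow> ('a set \<Rightarrow> 'a set) \<Rightarrow> bool" where
  "is_projection V R n F P \<longleftrightarrow>
     (\<forall>v \<in> clusters V R. P v \<in> F) \<and>
     (\<forall>v \<in> F. P v = v) \<and>
     (\<forall>v w. eg_edge V R n v w \<longrightarrow> P v = P w \<or> eg_edge V R n (P v) (P w)) \<and>
     (\<forall>v w. eg_edge V R n v w \<and> v \<in> F \<and> w \<notin> F \<longrightarrow> P v = P w)"

end

theory Submission
  imports Defs
begin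

lemma compress:
  assumes "successively (\<lambda>a b. P a = P b \<or> E (P a) (P b)) p" "p \<noteq> []"
  shows "\<exists>q. q \<noteq> [] \<and> hd q = P (hd p) \<and> last q = P (last p) \<and> set q \<subseteq> P ` set p
     \<and> successively E q \<and> length q \<le> length p
     \<and> (\<not> successively (\<lambda>a b. P a \<noteq> P b) p \<longrightarrow> length q < length p)"
  using assms
proof (induction p)
  case Nil
  then show ?case by simp
next
  case (Cons x xs)
  show ?case
  proof (cases xs)
    case Nil
    then show ?thesis by (intro exI[of _ "[P x]"]) auto
  next
    case (Cons y ys)
    have s: "successively (\<lambda>a b. P a = P b \<or> E (P a) (P b)) xs"
      using Cons.prems(1) Cons by simp
    obtain q where q: "q \<noteq> []" "hd q = P (hd xs)" "last q = P (last xs)" "set q \<subseteq> P ` set xs"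
      "successively E q" "length q \<le> length xs"
      "\<not> successively (\<lambda>a b. P a \<noteq> P b) xs \<longrightarrow> length q < length xs"
      using Cons.IH[OF s] Cons by auto
    show ?thesis
    proof (cases "P x = P y")
      case True
      then show ?thesis using q Cons by (intro exI[of _ q]) auto
    next
      case False
      then have "E (P x) (P y)" using Cons.prems(1) Cons by simp
      then have "successively E (P x # q)" using q Cons
        by (cases q) auto
      then show ?thesis using q Cons False by (intro exI[of _ "P x # q"]) auto
    qed
  qed
qed

theorem lemma3p3:
  fixes V :: "'a set" and R :: "('a \<times> 'a) set" and n :: nat
  assumes "V \<noteq> {}"
    and "refl_on V R" and "sym R"
    and "cluster_axioms V R n"
    and "\<forall>F. is_face V R F \<longrightarrow> (\<exists>P. is_projection V R n F P)"
  shows "non_leaving_face V R n"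
  unfolding non_leaving_face_def
proof (intro ballI allI impI)
  fix v w p F
  assume vw: "v \<in> clusters V R" "w \<in> clusters V R"
    and h: "geodesic V R n p v w \<and> minimal_face_containing V R F v w"
  have path: "eg_path V R n p v w" and geo: "\<And>q. eg_path V R n q v w \<Longrightarrow> length p \<le> length q"
    using h unfolding geodesic_def by auto
  have fF: "is_face V R F" "v \<in> F" "w \<in> F"
    using h unfolding minimal_face_containing_def by auto
  have Fcl: "F \<subseteq> clusters V R" using fF(1) unfolding is_face_def face_def by auto
  obtain P where P: "is_projection V R n F P" using assms(5) fF(1) by blast
  have P1: "\<And>x. x \<in> clusters V R \<Longrightarrow> P x \<in> F"
    and P2: "\<And>x. x \<in> F \<Longrightarrow> P x = x"
    and P3: "\<And>x y. eg_edge V R n x y \<Longrightarrow> P x = P y \<or> eg_edge V R n (P x) (P y)"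
    and P4: "\<And>x y. eg_edge V R n x y \<Longrightarrow> x \<in> F \<Longrightarrow> y \<notin> F \<Longrightarrow> P x = P y"
    using P unfolding is_projection_def by auto
  have pne: "p \<noteq> []" "hd p = v" "last p = w" "set p \<subseteq> clusters V R"
    and pe: "\<And>i. Suc i < length p \<Longrightarrow> eg_edge V R n (p ! i) (p ! Suc i)"
    using path unfolding eg_path_def by auto
  show "set p \<subseteq> F"
  proof (rule ccontr)
    assume "\<not> set p \<subseteq> F"
    then obtain x where "x \<in> set p" "x \<notin> F" by blast
    then obtain j where j: "j < length p" "p ! j \<notin> F" by (metis in_set_conv_nth)
    define k where "k = (LEAST j. j < length p \<and> p ! j \<notin> F)"
    have k: "k < length p" "p ! k \<notin> F" using LeastI[of "\<lambda>j. j < length p \<and> p ! j \<notin> F", OF conjI[OF j]]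
      unfolding k_def by auto
    have k0: "k \<noteq> 0" proof assume "k = 0" then have "p ! k = v" using pne by (cases p) auto then show False using k fF by simp qed
    then obtain i where i: "k = Suc i" by (cases k) auto
    have "p ! i \<in> F"
    proof (rule ccontr)
      assume "p ! i \<notin> F"
      then have "k \<le> i" unfolding k_def using k i by (intro Least_le) auto
      then show False using i by simp
    qed
    then have col: "P (p ! i) = P (p ! Suc i)" using P4 pe k i by auto
    have s: "successively (\<lambda>a b. P a = P b \<or> eg_edge V R n (P a) (P b)) p"
      unfolding successively_conv_nth using pe P3 by auto
    have ns: "\<not> successively (\<lambda>a b. P a \<noteq> P b) p"
      unfolding successively_conv_nth using col k i by auto
    obtain q where q: "q \<noteq> []" "hd q = P (hd p)" "last q = P (last p)" "set q \<subseteq> P ` set p"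
      "successively (eg_edge V R n) q" "length q < length p"
      using compress[OF s pne(1)] ns by auto
    have "set q \<subseteq> clusters V R" using q(4) pne(4) P1 Fcl by blast
    then have "eg_path V R n q v w"
      unfolding eg_path_def using q pne P2 fF by (auto simp: successively_conv_nth)
    then show False using geo q(6) by fastforce
  qed
qed

end
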